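(* Let $k\in\mathbb{N}$, $m=\lfloor\sqrt{k}\rfloor$, and let $G_k$ be the graph described in the context, with the geodesic-biased random walk with target $b$ and excited set $\{a\}$. Write $v_{m+1}:=b$ and $T(x,y)$ for the expected first hitting time of $y$ by this walk started at $x$. Then for every $1\le j\le m+1$, \[T(a,v_j)\ \ge\ \frac{k^{j-1}}{4^{j-1}\,(j-1)!}.\] In particular $T(a,b)\ge k^m/(4^m m!)$.
   Context: Geodesic-biased random walk: let $G$ be a finite connected graph, $b\in V(G)$ a target vertex and $\mathcal{X}\subseteq V(G)$ a set of excited vertices. For every vertex $x\neq b$ fix in advance one shortest path in $G$ from $x$ to $b$. From an unexcited vertex the walker moves to a uniformly random neighbour; from an excited vertex she moves to the next vertex on the fixed shortest path to $b$. The graph $G_k$ ($k\in\mathbb{N}$, $m=\lfloor\sqrt k\rfloor$): start with a path $a,v_1,v_2,\dots,v_m,b$ (of length $m+1$); then for each $i\in[m]$ add $k$ new paths from $a$ to $v_i$, each of length $i+1$ (i.e. each with $i$ new internal vertices), all these $km$ added paths being internally vertex-disjoint from each other and from the original path. In $G_k$ the unique shortest path from $a$ to $b$ is $a,v_1,\dots,v_m,b$, so from the excited vertex $a$ the walker always moves to $v_1$. *)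

theory Defs
  imports Complex_Main "HOL-Library.Extended_Nonnegative_Real"
begin

text \<open>A graph is given by a finite vertex set Vs and a symmetric edge predicate E
  (edges only between vertices of Vs).\<close>

definition nbrs :: "'v set \<Rightarrow> ('v \<Rightarrow> 'v \<Rightarrow> bool) \<Rightarrow> 'v \<Rightarrow> 'v set" where
  "nbrs Vs E x = {y \<in> Vs. E x y}"

definition gdist :: "('v \<Rightarrow> 'v \<Rightarrow> bool) \<Rightarrow> 'v \<Rightarrow> 'v \<Rightarrow> nat" where
  "gdist E x y = (LEAST n. (x, y) \<in> {(u, w). E u w} ^^ n)"

definition geodesic_next :: "('v \<Rightarrow> 'v \<Rightarrow> bool) \<Rightarrow> 'v \<Rightarrow> 'v set \<Rightarrow> ('v \<Rightarrow> 'v) \<Rightarrow> bool" where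
  "geodesic_next E b X nxt \<longleftrightarrow>
     (\<forall>x\<in>X. x \<noteq> b \<longrightarrow> E x (nxt x) \<and> gdist E (nxt x) b + 1 = gdist E x b)"

definition gbrw_P :: "'v set \<Rightarrow> ('v \<Rightarrow> 'v \<Rightarrow> bool) \<Rightarrow> 'v \<Rightarrow> 'v set \<Rightarrow> ('v \<Rightarrow> 'v)
                      \<Rightarrow> 'v \<Rightarrow> 'v \<Rightarrow> real" where
  "gbrw_P Vs E b X nxt x y =
     (if x \<in> X \<and> x \<noteq> b then (if y = nxt x then 1 else 0)
      else (if y \<in> nbrs Vs E x then 1 / real (card (nbrs Vs E x)) else 0))"

text \<open>surv P Vs y n x = probability that the chain with transition matrix P started
  at x has not visited y at any of the times 0,...,n  (i.e. P_x(tau_y > n)).\<close>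
fun surv :: "('v \<Rightarrow> 'v \<Rightarrow> real) \<Rightarrow> 'v set \<Rightarrow> 'v \<Rightarrow> nat \<Rightarrow> 'v \<Rightarrow> real" where
  "surv P Vs y 0 x = (if x = y then 0 else 1)"
| "surv P Vs y (Suc n) x = (if x = y then 0 else (\<Sum>z\<in>Vs. P x z * surv P Vs y n z))"

text \<open>Expected first hitting time E_x[tau_y] = sum_{n>=0} P_x(tau_y > n), in [0,\<infinity>].\<close>
definition hit_time :: "('v \<Rightarrow> 'v \<Rightarrow> real) \<Rightarrow> 'v set \<Rightarrow> 'v \<Rightarrow> 'v \<Rightarrow> ennreal" where
  "hit_time P Vs x y = (\<Sum>n. ennreal (surv P Vs y n x))"

text \<open>Vertices: A = a, B = b, V i = v_i (1 \<le> i \<le> m), and W i p t = the t-th internal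
  vertex (1 \<le> t \<le> i) of the p-th added path (1 \<le> p \<le> k) from a to v_i.\<close>
datatype vtx = A | B | V nat | W nat nat nat

definition msq :: "nat \<Rightarrow> nat" where
  "msq k = nat \<lfloor>sqrt (real k)\<rfloor>"

definition Gverts :: "nat \<Rightarrow> vtx set" where
  "Gverts k = {A, B} \<union> {V i | i. 1 \<le> i \<and> i \<le> msq k}
      \<union> {W i p t | i p t. 1 \<le> i \<and> i \<le> msq k \<and> 1 \<le> p \<and> p \<le> k \<and> 1 \<le> t \<and> t \<le> i}"

definition mainv :: "nat \<Rightarrow> nat \<Rightarrow> vtx" where
  "mainv k j = (if j = 0 then A else if j = msq k + 1 then B else V j)"

definition Gedge0 :: "nat \<Rightarrow> vtx \<Rightarrow> vtx \<Rightarrow> bool" where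
  "Gedge0 k x y \<longleftrightarrow>
     (\<exists>j\<le>msq k. x = mainv k j \<and> y = mainv k (j + 1))
   \<or> (\<exists>i p. 1 \<le> i \<and> i \<le> msq k \<and> 1 \<le> p \<and> p \<le> k \<and>
        ((x = A \<and> y = W i p 1)
         \<or> (\<exists>t. 1 \<le> t \<and> t < i \<and> x = W i p t \<and> y = W i p (t + 1))
         \<or> (x = W i p i \<and> y = V i)))"

definition Gedge :: "nat \<Rightarrow> vtx \<Rightarrow> vtx \<Rightarrow> bool" where
  "Gedge k x y \<longleftrightarrow> Gedge0 k x y \<or> Gedge0 k y x"

end

theory Submission
  imports Defs
begin

lemma surv_nonneg:
  assumes "\<And>x z. 0 \<le> P x z"
  shows "0 \<le> surv P Vs y n x"
  by (induction n arbitrary: x) (auto intro!: sum_nonneg mult_nonneg_nonneg assms)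

lemma surv_y: "surv P Vs y n y = 0"
  by (cases n) auto

lemma key_ineq:
  assumes P0: "\<And>x z. 0 \<le> P x z"
    and fy: "f y \<le> 0" and fM: "\<And>x. x \<in> Vs \<Longrightarrow> f x \<le> M"
    and sub: "\<And>x. x \<in> Vs \<Longrightarrow> x \<noteq> y \<Longrightarrow> f x \<le> 1 + (\<Sum>z\<in>Vs. P x z * f z)"
  shows "x \<in> Vs \<Longrightarrow> f x \<le> (\<Sum>t<n. surv P Vs y t x) + M * surv P Vs y n x"
proof (induction n arbitrary: x)
  case 0
  then show ?case using fy fM by auto
next
  case (Suc n)
  show ?case
  proof (cases "x = y")
    case True
    then show ?thesis using fy by (simp add: surv_y)
  next
    case False
    have "f x \<le> 1 + (\<Sum>z\<in>Vs. P x z * f z)" using sub Suc.prems False by blast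
    also have "\<dots> \<le> 1 + (\<Sum>z\<in>Vs. P x z * ((\<Sum>t<n. surv P Vs y t z) + M * surv P Vs y n z))"
      using Suc.IH by (intro add_left_mono sum_mono mult_left_mono P0) auto
    also have "\<dots> = 1 + (\<Sum>t<n. (\<Sum>z\<in>Vs. P x z * surv P Vs y t z)) + M * (\<Sum>z\<in>Vs. P x z * surv P Vs y n z)"
    proof -
      have e1: "\<And>z. P x z * ((\<Sum>t<n. surv P Vs y t z) + M * surv P Vs y n z) = (\<Sum>t<n. P x z * surv P Vs y t z) + M * (P x z * surv P Vs y n z)"
        by (simp add: distrib_left sum_distrib_left mult.left_commute)
      have "(\<Sum>z\<in>Vs. P x z * ((\<Sum>t<n. surv P Vs y t z) + M * surv P Vs y n z)) = (\<Sum>z\<in>Vs. \<Sum>t<n. P x z * surv P Vs y t z) + M * (\<Sum>z\<in>Vs. P x z * surv P Vs y n z)"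
        unfolding e1 sum.distrib sum_distrib_left ..
      also have "\<dots> = (\<Sum>t<n. \<Sum>z\<in>Vs. P x z * surv P Vs y t z) + M * (\<Sum>z\<in>Vs. P x z * surv P Vs y n z)"
        by (subst sum.swap) (rule refl)
      finally show ?thesis by simp
    qed
    also have "\<dots> = (\<Sum>t<Suc n. surv P Vs y t x) + M * surv P Vs y (Suc n) x"
      by (subst sum.lessThan_Suc_shift) (simp add: False)
    finally show ?thesis .
  qed
qed

lemma hit_time_lower:
  assumes P0: "\<And>x z. 0 \<le> P x z"
    and fy: "f y \<le> 0" and fM: "\<And>x. x \<in> Vs \<Longrightarrow> f x \<le> M"
    and sub: "\<And>x. x \<in> Vs \<Longrightarrow> x \<noteq> y \<Longrightarrow> f x \<le> 1 + (\<Sum>z\<in>Vs. P x z * f z)"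
    and x: "x \<in> Vs"
  shows "ennreal (f x) \<le> hit_time P Vs x y"
proof (cases "hit_time P Vs x y = top")
  case True
  then show ?thesis by simp
next
  case False
  let ?s = "\<lambda>n. surv P Vs y n x"
  have nn: "\<And>n. 0 \<le> ?s n" using surv_nonneg[of P, OF P0] by blast
  have sm: "summable ?s" by (rule summable_suminf_not_top[OF nn]) (use False in \<open>simp add: hit_time_def\<close>)
  have eq: "hit_time P Vs x y = ennreal (suminf ?s)" using False nn unfolding hit_time_def by simp
  have "(\<lambda>n. (\<Sum>t<n. ?s t) + M * ?s n) \<longlonglongrightarrow> suminf ?s + M * 0"
    by (intro tendsto_intros summable_LIMSEQ summable_LIMSEQ_zero sm)
  then have lim: "(\<lambda>n. (\<Sum>t<n. ?s t) + M * ?s n) \<longlonglongrightarrow> suminf ?s" by simp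
  have "\<forall>n. f x \<le> (\<Sum>t<n. ?s t) + M * ?s n" using key_ineq[OF P0 fy fM sub x] by blast
  then have "f x \<le> suminf ?s" using LIMSEQ_le_const[OF lim] by blast
  then show ?thesis using eq by (simp add: ennreal_leI)
qed

lemma mainv_eq:
  "mainv k j = A \<longleftrightarrow> j = 0"
  "mainv k j = B \<longleftrightarrow> j = Suc (msq k)"
  "mainv k j = V i \<longleftrightarrow> (j = i \<and> i \<noteq> 0 \<and> i \<noteq> Suc (msq k))"
  "mainv k j \<noteq> W i p t"
  "A = mainv k j \<longleftrightarrow> j = 0"
  "B = mainv k j \<longleftrightarrow> j = Suc (msq k)"
  "V i = mainv k j \<longleftrightarrow> (j = i \<and> i \<noteq> 0 \<and> i \<noteq> Suc (msq k))"
  "W i p t \<noteq> mainv k j"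
  by (auto simp: mainv_def)

lemma mainv_0[simp]: "mainv k 0 = A" and mainv_top[simp]: "mainv k (Suc (msq k)) = B"
  by (auto simp: mainv_def)

lemma G0_W: "Gedge0 k (W i p t) y \<longleftrightarrow> 1\<le>i \<and> i\<le>msq k \<and> 1\<le>p \<and> p\<le>k \<and> 1\<le>t \<and> t\<le>i \<and>
   (t<i \<and> y = W i p (t+1) \<or> t = i \<and> y = V i)"
  unfolding Gedge0_def by (auto simp: mainv_eq)

lemma G0_toW: "Gedge0 k y (W i p t) \<longleftrightarrow> 1\<le>i \<and> i\<le>msq k \<and> 1\<le>p \<and> p\<le>k \<and> 1\<le>t \<and> t\<le>i \<and>
   (t = 1 \<and> y = A \<or> 1 < t \<and> y = W i p (t-1))"
  unfolding Gedge0_def by (auto simp: mainv_eq)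

lemma G0_V: "Gedge0 k (V i) y \<longleftrightarrow> 1\<le>i \<and> i\<le>msq k \<and> y = mainv k (i+1)"
  unfolding Gedge0_def by (auto simp: mainv_eq)

lemma G0_toV: "Gedge0 k y (V i) \<longleftrightarrow> 1\<le>i \<and> i\<le>msq k \<and> (y = mainv k (i-1) \<or> (\<exists>p. 1\<le>p \<and> p\<le>k \<and> y = W i p i))"
  unfolding Gedge0_def apply (auto simp: mainv_eq)
  apply (rule_tac x="i - 1" in exI) by auto

lemma G0_A: "Gedge0 k A y \<longleftrightarrow> y = mainv k 1 \<or> (\<exists>i p. 1\<le>i \<and> i\<le>msq k \<and> 1\<le>p \<and> p\<le>k \<and> y = W i p 1)"
  unfolding Gedge0_def by (auto simp: mainv_eq)

lemma G0_toA: "\<not> Gedge0 k y A"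
  unfolding Gedge0_def by (auto simp: mainv_eq)

lemma G0_B: "\<not> Gedge0 k B y"
  unfolding Gedge0_def by (auto simp: mainv_eq)

lemma G0_toB: "Gedge0 k y B \<longleftrightarrow> y = mainv k (msq k)"
  unfolding Gedge0_def by (auto simp: mainv_eq)

lemma mem_G[simp]:
  "A \<in> Gverts k" "B \<in> Gverts k"
  "V i \<in> Gverts k \<longleftrightarrow> 1 \<le> i \<and> i \<le> msq k"
  "W i p t \<in> Gverts k \<longleftrightarrow> 1 \<le> i \<and> i \<le> msq k \<and> 1 \<le> p \<and> p \<le> k \<and> 1 \<le> t \<and> t \<le> i"
  by (auto simp: Gverts_def)

lemma finite_G: "finite (Gverts k)"
proof -
  have "Gverts k \<subseteq> {A, B} \<union> V ` {..msq k} \<union> (\<lambda>(i,p,t). W i p t) ` ({..msq k} \<times> {..k} \<times> {..msq k})"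
    by (auto simp: Gverts_def image_iff)
  then show ?thesis by (rule finite_subset) auto
qed

lemma mainv_mem: "j \<le> Suc (msq k) \<Longrightarrow> mainv k j \<in> Gverts k"
  by (auto simp: mainv_def)

lemma nbrs_W:
  assumes "1 \<le> i" "i \<le> msq k" "1 \<le> p" "p \<le> k" "1 \<le> t" "t \<le> i"
  shows "nbrs (Gverts k) (Gedge k) (W i p t) =
     {if t = 1 then A else W i p (t - 1), if t = i then V i else W i p (t + 1)}"
  using assms by (auto simp: nbrs_def Gedge_def G0_W G0_toW split: if_splits)

lemma nbrs_V:
  assumes "1 \<le> i" "i \<le> msq k"
  shows "nbrs (Gverts k) (Gedge k) (V i) =
     {mainv k (i - 1), mainv k (i + 1)} \<union> (\<lambda>p. W i p i) ` {1..k}"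
  using assms mainv_mem[of "i-1" k] mainv_mem[of "i+1" k]
  by (auto simp: nbrs_def Gedge_def G0_V G0_toV)

abbreviation "PP k nxt \<equiv> gbrw_P (Gverts k) (Gedge k) B {A} nxt"

lemma sum_P_unexc:
  assumes "x \<noteq> A"
  shows "(\<Sum>z\<in>Gverts k. PP k nxt x z * g z) =
    (\<Sum>z\<in>nbrs (Gverts k) (Gedge k) x. g z) / card (nbrs (Gverts k) (Gedge k) x)"
proof -
  let ?N = "nbrs (Gverts k) (Gedge k) x"
  have sub: "?N \<subseteq> Gverts k" by (auto simp: nbrs_def)
  have "(\<Sum>z\<in>Gverts k. PP k nxt x z * g z) = (\<Sum>z\<in>Gverts k. if z \<in> ?N then g z / card ?N else 0)"
    using assms by (intro sum.cong) (auto simp: gbrw_P_def)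
  also have "\<dots> = (\<Sum>z\<in>?N. g z / card ?N)"
    using sub finite_G[of k] by (simp add: sum.If_cases Int_absorb1 inf.absorb2)
  also have "\<dots> = (\<Sum>z\<in>?N. g z) / card ?N" by (simp add: sum_divide_distrib)
  finally show ?thesis .
qed

lemma sum_P_A:
  assumes "nxt A \<in> Gverts k"
  shows "(\<Sum>z\<in>Gverts k. PP k nxt A z * g z) = g (nxt A)"
proof -
  have "(\<Sum>z\<in>Gverts k. PP k nxt A z * g z) = (\<Sum>z\<in>Gverts k. if z = nxt A then g z else 0)"
    by (intro sum.cong) (auto simp: gbrw_P_def)
  also have "\<dots> = g (nxt A)" using assms finite_G[of k] by simp
  finally show ?thesis .
qed

lemma P_nonneg: "0 \<le> gbrw_P Vs E b X nxt x z"
  by (auto simp: gbrw_P_def)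

lemma sum_P_nonneg:
  assumes "\<And>z. z \<in> Gverts k \<Longrightarrow> 0 \<le> g z"
  shows "0 \<le> (\<Sum>z\<in>Gverts k. PP k nxt x z * g z)"
  using assms by (intro sum_nonneg mult_nonneg_nonneg P_nonneg) auto

lemma card_nbrs_W:
  assumes "1 \<le> i" "i \<le> msq k" "1 \<le> p" "p \<le> k" "1 \<le> t" "t \<le> i"
  shows "card (nbrs (Gverts k) (Gedge k) (W i p t)) = 2"
  using assms by (auto simp: nbrs_W)

lemma sum_nbrs_V:
  assumes "1 \<le> i" "i \<le> msq k"
  shows "card (nbrs (Gverts k) (Gedge k) (V i)) = k + 2"
    "(\<Sum>z\<in>nbrs (Gverts k) (Gedge k) (V i). g z) = g (mainv k (i - 1)) + g (mainv k (i + 1)) + (\<Sum>p=1..k. g (W i p i))"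
proof -
  have d: "mainv k (i - 1) \<noteq> mainv k (i + 1)" using assms by (auto simp: mainv_def)
  have dj: "{mainv k (i - 1), mainv k (i + 1)} \<inter> (\<lambda>p. W i p i) ` {1..k} = {}"
    by (auto simp: mainv_def)
  have inj: "inj_on (\<lambda>p. W i p i) {1..k}" by (auto simp: inj_on_def)
  show "card (nbrs (Gverts k) (Gedge k) (V i)) = k + 2"
    using assms d dj inj by (simp add: nbrs_V card_Un_disjoint card_image)
  show "(\<Sum>z\<in>nbrs (Gverts k) (Gedge k) (V i). g z) = g (mainv k (i - 1)) + g (mainv k (i + 1)) + (\<Sum>p=1..k. g (W i p i))"
    using assms d dj inj by (simp add: nbrs_V sum.union_disjoint sum.reindex add.assoc)
qed

definition dd :: "nat \<Rightarrow> vtx \<Rightarrow> int" where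
  "dd k x = (case x of A \<Rightarrow> int (msq k) + 1 | B \<Rightarrow> 0 | V i \<Rightarrow> int (msq k) + 1 - int i
     | W i p t \<Rightarrow> int (msq k) + 2 - int t)"

lemma dd_mainv: "j \<le> Suc (msq k) \<Longrightarrow> dd k (mainv k j) = int (msq k) + 1 - int j"
  by (auto simp: mainv_def dd_def)

lemma dd_edge0: "Gedge0 k u w \<Longrightarrow> \<bar>dd k u - dd k w\<bar> \<le> 1"
proof (cases u)
  case A
  assume "Gedge0 k u w"
  then show ?thesis using A by (auto simp: G0_A dd_mainv) (auto simp: dd_def)
next
  case B
  assume "Gedge0 k u w"
  then show ?thesis using B by (auto simp: G0_B)
next
  case (V i)
  assume "Gedge0 k u w"
  then show ?thesis using V by (auto simp: G0_V dd_mainv) (auto simp: dd_def)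
next
  case (W i p t)
  assume "Gedge0 k u w"
  then show ?thesis using W by (auto simp: G0_W dd_def)
qed

lemma dd_edge: "Gedge k u w \<Longrightarrow> dd k u \<le> dd k w + 1"
  unfolding Gedge_def using dd_edge0[of k u w] dd_edge0[of k w u] by auto

lemma dd_relpow: "(u, w) \<in> {(u, w). Gedge k u w} ^^ n \<Longrightarrow> dd k u \<le> dd k w + int n"
proof (induction n arbitrary: u)
  case 0
  then show ?case by simp
next
  case (Suc n)
  then obtain v where "(u, v) \<in> {(u, w). Gedge k u w}" "(v, w) \<in> {(u, w). Gedge k u w} ^^ n"
    using relpow_Suc_D2 by metis
  then show ?case using Suc.IH dd_edge[of k u v] by fastforce
qed

lemma path: "j \<le> Suc (msq k) \<Longrightarrow> (A, mainv k j) \<in> {(u, w). Gedge k u w} ^^ j"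
proof (induction j)
  case 0
  then show ?case by simp
next
  case (Suc j)
  have "Gedge0 k (mainv k j) (mainv k (j + 1))" using Suc.prems unfolding Gedge0_def by auto
  then have "(mainv k j, mainv k (Suc j)) \<in> {(u, w). Gedge k u w}" by (simp add: Gedge_def)
  then show ?case using Suc by auto
qed

lemma nxtA:
  assumes g: "geodesic_next (Gedge k) B {A} nxt" and m: "1 \<le> msq k"
  shows "nxt A = V 1"
proof -
  let ?R = "{(u, w). Gedge k u w}"
  have e: "Gedge k A (nxt A)" and gd: "gdist (Gedge k) (nxt A) B + 1 = gdist (Gedge k) A B"
    using g by (auto simp: geodesic_next_def)
  have pAB: "(A, B) \<in> ?R ^^ (Suc (msq k))" using path[of "Suc (msq k)" k] by simp
  have "gdist (Gedge k) A B \<le> Suc (msq k)"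
    unfolding gdist_def by (rule Least_le) (rule pAB)
  moreover have "(nxt A, A) \<in> ?R" using e by (auto simp: Gedge_def)
  then have "(nxt A, B) \<in> ?R ^^ Suc (Suc (msq k))" using pAB by (rule relpow_Suc_I2)
  then have pn: "(nxt A, B) \<in> ?R ^^ gdist (Gedge k) (nxt A) B"
    unfolding gdist_def by (rule LeastI)
  have "dd k (nxt A) \<le> int (gdist (Gedge k) (nxt A) B)"
    using dd_relpow[OF pn] by (simp add: dd_def)
  ultimately have le: "dd k (nxt A) \<le> int (msq k)" using gd by linarith
  have "Gedge0 k A (nxt A)" using e G0_toA by (auto simp: Gedge_def)
  then have "nxt A = mainv k 1 \<or> (\<exists>i p. nxt A = W i p 1)" by (auto simp: G0_A)
  then show ?thesis using le m by (auto simp: dd_def mainv_def)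
qed

definition ee :: "nat \<Rightarrow> nat \<Rightarrow> nat \<Rightarrow> real" where
  "ee k j i = (\<Prod>l\<in>{i<..j}. real l / real k)"

lemma ee_j: "ee k j j = 1" by (simp add: ee_def)

lemma ee_step: assumes "i < j" shows "ee k j i = real (Suc i) / real k * ee k j (Suc i)"
proof -
  have "{i<..j} = insert (Suc i) {Suc i<..j}" using assms by auto
  then show ?thesis by (simp add: ee_def)
qed

lemma ee_pos: "0 < k \<Longrightarrow> 0 < ee k j i"
  unfolding ee_def by (rule prod_pos) auto

lemma ee_le1: "j \<le> k \<Longrightarrow> ee k j i \<le> 1"
  unfolding ee_def by (rule prod_le_1) auto

lemma ee_1: assumes kp: "0 < k" and j1: "1 \<le> j" shows "ee k j 1 * real k ^ (j - 1) = fact j"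
  using j1
proof (induction j rule: dec_induct)
  case base
  then show ?case by (simp add: ee_j)
next
  case (step j)
  have s: "ee k (Suc j) 1 = real (Suc j) / real k * ee k j 1"
  proof -
    have "{1<..Suc j} = insert (Suc j) {1<..j}" using step by auto
    then show ?thesis by (simp add: ee_def)
  qed
  have pj: "real k ^ (Suc j - 1) = real k * real k ^ (j - 1)" using step(1) by (cases j) auto
  have "ee k (Suc j) 1 * real k ^ (Suc j - 1) = real (Suc j) / real k * ee k j 1 * (real k * real k ^ (j - 1))"
    by (simp only: s pj)
  also have "\<dots> = real (Suc j) * (ee k j 1 * real k ^ (j - 1))" using kp by simp
  also have "\<dots> = real (Suc j) * fact j" using step(3) by simp
  also have "\<dots> = fact (Suc j)" by simp
  finally show ?case .
qed

lemma four_pow: "real (Suc n) \<le> 4 ^ n"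
  by (induction n) auto

lemma msq_sq: "msq k * msq k \<le> k"
proof -
  have "real (msq k) \<le> sqrt (real k)" unfolding msq_def by simp
  then have "real (msq k) * real (msq k) \<le> sqrt (real k) * sqrt (real k)"
    by (intro mult_mono) auto
  then have "real (msq k * msq k) \<le> real k" by simp
  then show ?thesis by linarith
qed

lemma msq_le: "2 \<le> k \<Longrightarrow> msq k + 1 \<le> k"
proof -
  assume k: "2 \<le> k"
  show ?thesis
  proof (cases "msq k \<le> 1")
    case True then show ?thesis using k by simp
  next
    case False
    then have "2 * msq k \<le> msq k * msq k" by (intro mult_right_mono) auto
    then have "msq k + 1 \<le> msq k * msq k" using False by linarith
    then show ?thesis using msq_sq[of k] by simp
  qed
qed

definition ff :: "nat \<Rightarrow> nat \<Rightarrow> vtx \<Rightarrow> real" where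
  "ff k j x = (case x of A \<Rightarrow> 1 / ee k j 1 | B \<Rightarrow> 0
     | V i \<Rightarrow> if i < j then (1 / ee k j 1) * (1 - ee k j i) else 0
     | W i p t \<Rightarrow> if i < j then (1 / ee k j 1) * (1 - real t * ee k j i / (real i + 1)) else 0)"

lemma aux_avg:
  fixes a b c C :: real
  assumes "a + b = 2 * c"
  shows "(C * (1 - a) + C * (1 - b)) / 2 = C * (1 - c)"
proof -
  have "C * (1 - a) + C * (1 - b) = C * (2 - (a + b))" by (simp add: algebra_simps)
  also have "\<dots> = 2 * (C * (1 - c))" using assms by (simp add: algebra_simps)
  finally show ?thesis by simp
qed

lemma eqn_ring:
  fixes a b C E K :: real
  assumes "a + K * b = K * E"
  shows "C * (1 - 2 * E) + C * (1 - a) + K * (C * (1 - b)) = (K + 2) * (C * (1 - E))"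
  using assms by algebra

lemma eqn_aux:
  fixes C E K I :: real
  assumes "0 \<le> I"
  shows "C * (1 - 2 * E) + C * (1 - E * K / (I + 1)) + K * (C * (1 - I * E / (I + 1))) = (K + 2) * (C * (1 - E))"
proof -
  have ne: "I + 1 \<noteq> 0" using assms by simp
  have "E * K / (I + 1) + K * (I * E / (I + 1)) = (E * K + K * I * E) / (I + 1)"
    by (simp add: add_divide_distrib)
  also have "E * K + K * I * E = (K * E) * (I + 1)" by (simp add: algebra_simps)
  also have "(K * E) * (I + 1) / (I + 1) = K * E" using ne by simp
  finally have "E * K / (I + 1) + K * (I * E / (I + 1)) = K * E" .
  then show ?thesis
    using eqn_ring[of "E * K / (I + 1)" K "I * E / (I + 1)" E C] by simp
qed

lemma trivial_case:
  assumes j1: "1 \<le> j"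
  shows "ennreal 1 \<le> hit_time (PP k nxt) (Gverts k) A (mainv k j)"
proof -
  define f0 where "f0 = (\<lambda>x. if x = A then 1 else (0::real))"
  have nn: "\<And>z. z \<in> Gverts k \<Longrightarrow> 0 \<le> f0 z" by (simp add: f0_def)
  have "ennreal (f0 A) \<le> hit_time (PP k nxt) (Gverts k) A (mainv k j)"
  proof (rule hit_time_lower[where M=1])
    show "f0 (mainv k j) \<le> 0" using j1 by (simp add: mainv_eq f0_def)
    show "\<And>x. x \<in> Gverts k \<Longrightarrow> f0 x \<le> 1" by (simp add: f0_def)
    show "\<And>x z. 0 \<le> PP k nxt x z" by (rule P_nonneg)
    show "A \<in> Gverts k" by simp
    fix x assume "x \<in> Gverts k" "x \<noteq> mainv k j"
    have "0 \<le> (\<Sum>z\<in>Gverts k. PP k nxt x z * f0 z)" using sum_P_nonneg[where k=k and g=f0 and nxt=nxt and x=x] nn by blast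
    moreover have "f0 x \<le> 1" by (simp add: f0_def)
    ultimately show "f0 x \<le> 1 + (\<Sum>z\<in>Gverts k. PP k nxt x z * f0 z)" by linarith
  qed
  then show ?thesis by (simp add: f0_def)
qed

lemma main_case:
  assumes g: "geodesic_next (Gedge k) B {A} nxt"
    and j2: "2 \<le> j" and jm: "j \<le> msq k + 1" and k2: "2 \<le> k"
  shows "ennreal (1 / ee k j 1) \<le> hit_time (PP k nxt) (Gverts k) A (mainv k j)"
proof -
  let ?m = "msq k"
  let ?e = "ee k j"
  define C where "C = 1 / ee k j 1"
  let ?f = "ff k j"
  have m1: "1 \<le> ?m" using j2 jm by simp
  have jk: "j \<le> k" using msq_le[OF k2] jm by simp
  have kp: "0 < k" using k2 by simp
  have epos: "\<And>i. 0 < ?e i" using ee_pos[OF kp] .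
  have ele: "\<And>i. ?e i \<le> 1" using ee_le1[OF jk] .
  have Cpos: "0 < C" using epos[of 1] by (simp add: C_def)
  have Ce1: "C * ?e 1 = 1" using epos[of 1] by (simp add: C_def)
  have nxt: "nxt A = V 1" using nxtA[OF g m1] .
  have fA: "?f A = C" by (simp add: ff_def C_def)
  have fB: "?f B = 0" by (simp add: ff_def)
  have fV: "\<And>i. ?f (V i) = (if i < j then C * (1 - ?e i) else 0)" by (simp add: ff_def C_def)
  have fW: "\<And>i p t. ?f (W i p t) = (if i < j then C * (1 - real t * ?e i / (real i + 1)) else 0)"
    by (simp add: ff_def C_def)
  have ftarget: "?f (mainv k j) = 0"
    using jm j2 by (auto simp: mainv_def ff_def)
  have fnn: "\<And>x. x \<in> Gverts k \<Longrightarrow> 0 \<le> ?f x"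
  proof -
    fix x assume x: "x \<in> Gverts k"
    show "0 \<le> ?f x"
    proof (cases x)
      case A then show ?thesis using Cpos fA by simp
    next
      case B then show ?thesis using fB by simp
    next
      case (V i) then show ?thesis using Cpos ele[of i] by (simp add: fV)
    next
      case (W i p t)
      have "real t * ?e i \<le> real i + 1"
      proof -
        have "real t * ?e i \<le> real t * 1" using ele[of i] by (intro mult_left_mono) auto
        moreover have "real t \<le> real i" using x W by simp
        ultimately show ?thesis by linarith
      qed
      then have "real t * ?e i / (real i + 1) \<le> 1" by (simp add: divide_le_eq_1)
      then show ?thesis using Cpos W by (simp add: fW)
    qed
  qed
  have fM: "\<And>x. x \<in> Gverts k \<Longrightarrow> ?f x \<le> C"
  proof -
    fix x assume x: "x \<in> Gverts k"
    show "?f x \<le> C"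
    proof (cases x)
      case A then show ?thesis using fA by simp
    next
      case B then show ?thesis using fB Cpos by simp
    next
      case (V i) then show ?thesis using Cpos epos[of i] by (simp add: fV)
    next
      case (W i p t)
      have "0 \<le> real t * ?e i / (real i + 1)" using epos[of i] by simp
      then show ?thesis using Cpos W by (simp add: fW mult_le_cancel_left1)
    qed
  qed
  have sub: "\<And>x. x \<in> Gverts k \<Longrightarrow> x \<noteq> mainv k j \<Longrightarrow> ?f x \<le> 1 + (\<Sum>z\<in>Gverts k. PP k nxt x z * ?f z)"
  proof -
    fix x assume x: "x \<in> Gverts k" and xt: "x \<noteq> mainv k j"
    have triv: "?f x = 0 \<Longrightarrow> ?f x \<le> 1 + (\<Sum>z\<in>Gverts k. PP k nxt x z * ?f z)"
      using sum_P_nonneg[where k=k and g="ff k j" and nxt=nxt and x=x] fnn by simp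
    show "?f x \<le> 1 + (\<Sum>z\<in>Gverts k. PP k nxt x z * ?f z)"
    proof (cases x)
      case A
      have "(\<Sum>z\<in>Gverts k. PP k nxt x z * ?f z) = ?f (V 1)"
        using A sum_P_A[of nxt k] nxt m1 by simp
      also have "\<dots> = C * (1 - ?e 1)" using j2 by (simp add: fV)
      finally show ?thesis using A fA Ce1 by (simp add: algebra_simps)
    next
      case B then show ?thesis using triv fB by simp
    next
      case (V i)
      show ?thesis
      proof (cases "i < j")
        case False then show ?thesis using triv V fV by simp
      next
        case True
        have i1: "1 \<le> i" and im: "i \<le> ?m" using x V by auto
        define E where "E = ?e i"
        have Epos: "0 < E" using epos by (simp add: E_def)
        have h1: "C * (1 - 2 * E) \<le> ?f (mainv k (i - 1))"
        proof (cases "i = 1")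
          case True then show ?thesis using Cpos Epos fA by simp
        next
          case False
          then have mv: "mainv k (i - 1) = V (i - 1)" using i1 im by (simp add: mainv_def)
          have st: "?e (i - 1) = real i / real k * E" using ee_step[of "i - 1" j k] True False i1
            by (simp add: E_def)
          have "real i / real k \<le> 1" using True jk kp by simp
          then have "real i / real k * E \<le> 1 * E" using Epos by (intro mult_right_mono) auto
          then have "?e (i - 1) \<le> 2 * E" using st Epos by linarith
          moreover have "i - 1 < j" using True by simp
          ultimately show ?thesis using mv Cpos by (simp add: fV mult_left_mono)
        qed
        have h2: "?f (mainv k (i + 1)) = C * (1 - E * real k / (real i + 1))"
        proof -
          have st: "E = real (Suc i) / real k * ?e (Suc i)" using ee_step[OF True] by (simp add: E_def)
          then have st': "?e (Suc i) = E * real k / (real i + 1)" using kp by (simp add: field_simps)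
          show ?thesis
          proof (cases "Suc i = j")
            case True
            then have q1: "E * real k / (real i + 1) = 1" using st' ee_j[of k j] Epos kp by simp
            have q2: "C * (1 - E * real k / (real i + 1)) = 0" by (simp only: q1) simp
            have "mainv k (i + 1) = mainv k j" using True by simp
            then show ?thesis using ftarget q2 by simp
          next
            case False
            then have "mainv k (i + 1) = V (Suc i)" using True jm by (simp add: mainv_def)
            then show ?thesis using False True st' by (simp add: fV)
          qed
        qed
        have h3: "(\<Sum>p=1..k. ?f (W i p i)) = real k * (C * (1 - real i * E / (real i + 1)))"
        proof -
          have "(\<Sum>p=1..k. ?f (W i p i)) = (\<Sum>p=1..k. C * (1 - real i * E / (real i + 1)))"
            using True by (simp add: fW E_def)
          also have "\<dots> = real k * (C * (1 - real i * E / (real i + 1)))" by simp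
          finally show ?thesis .
        qed
        have eqn: "C * (1 - 2 * E) + C * (1 - E * real k / (real i + 1)) + real k * (C * (1 - real i * E / (real i + 1)))
             = (real k + 2) * (C * (1 - E))"
          by (rule eqn_aux) simp
        have "(real k + 2) * (C * (1 - E)) \<le> (\<Sum>z\<in>nbrs (Gverts k) (Gedge k) (V i). ?f z)"
          unfolding sum_nbrs_V(2)[OF i1 im] using h1 h2 h3 eqn by linarith
        then have "C * (1 - E) \<le> (\<Sum>z\<in>nbrs (Gverts k) (Gedge k) (V i). ?f z) / real (k + 2)"
          using pos_le_divide_eq[of "real k + 2" "C * (1 - E)"] by (simp add: mult.commute add.commute)
        then have "C * (1 - E) \<le> (\<Sum>z\<in>Gverts k. PP k nxt x z * ?f z)"
          using V sum_P_unexc[of x k nxt ?f] sum_nbrs_V(1)[OF i1 im] by simp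
        then show ?thesis using V True by (simp add: fV E_def)
      qed
    next
      case (W i p t)
      show ?thesis
      proof (cases "i < j")
        case False then show ?thesis using triv W fW by simp
      next
        case True
        have v: "1 \<le> i" "i \<le> ?m" "1 \<le> p" "p \<le> k" "1 \<le> t" "t \<le> i" using x W by auto
        define E where "E = ?e i"
        define pr where "pr = (if t = 1 then A else W i p (t - 1))"
        define nx where "nx = (if t = i then V i else W i p (t + 1))"
        have N: "nbrs (Gverts k) (Gedge k) (W i p t) = {pr, nx}" using nbrs_W[OF v] by (simp add: pr_def nx_def)
        have c2: "card {pr, nx} = 2" using card_nbrs_W[OF v] N by simp
        then have prnx: "pr \<noteq> nx" by auto
        have fpr: "?f pr = C * (1 - (real t - 1) * E / (real i + 1))"
          using True v by (auto simp: pr_def fA fW E_def of_nat_diff)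
        have fnx: "?f nx = C * (1 - (real t + 1) * E / (real i + 1))"
          using True v by (auto simp: nx_def fV fW E_def)
        have "(\<Sum>z\<in>Gverts k. PP k nxt x z * ?f z) = (?f pr + ?f nx) / 2"
          using W sum_P_unexc[of x k nxt ?f] N c2 prnx by simp
        also have "\<dots> = C * (1 - real t * E / (real i + 1))"
          unfolding fpr fnx
        proof (rule aux_avg)
          show "(real t - 1) * E / (real i + 1) + (real t + 1) * E / (real i + 1) = 2 * (real t * E / (real i + 1))"
            by (simp add: add_divide_distrib[symmetric] algebra_simps)
        qed
        finally show ?thesis using W True by (simp add: fW E_def)
      qed
    qed
  qed
  have "ennreal (?f A) \<le> hit_time (PP k nxt) (Gverts k) A (mainv k j)"
  proof (rule hit_time_lower[where M=C])
    show "\<And>x z. 0 \<le> PP k nxt x z" by (rule P_nonneg)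
    show "?f (mainv k j) \<le> 0" using ftarget by simp
    show "\<And>x. x \<in> Gverts k \<Longrightarrow> ?f x \<le> C" by (rule fM)
    show "\<And>x. x \<in> Gverts k \<Longrightarrow> x \<noteq> mainv k j \<Longrightarrow> ?f x \<le> 1 + (\<Sum>z\<in>Gverts k. PP k nxt x z * ?f z)"
      by (rule sub)
    show "A \<in> Gverts k" by simp
  qed
  then show ?thesis using fA C_def by simp
qed


lemma bound_le_1:
  assumes "j = 1 \<or> k \<le> 1"
  shows "real k ^ (j - 1) / (4 ^ (j - 1) * fact (j - 1)) \<le> 1"
proof -
  have n: "real k ^ (j - 1) \<le> 1"
  proof (cases "j = 1")
    case True then show ?thesis by simp
  next
    case False then have "k \<le> 1" using assms by simp
    then show ?thesis by (intro power_le_one) auto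
  qed
  have "1 * 1 \<le> (4::real) ^ (j - 1) * fact (j - 1)"
    by (rule mult_mono) auto
  then show ?thesis using n by (simp add: divide_le_eq)
qed

lemma bound_le_C:
  assumes j2: "2 \<le> j" and k2: "2 \<le> k"
  shows "real k ^ (j - 1) / (4 ^ (j - 1) * fact (j - 1)) \<le> 1 / ee k j 1"
proof -
  have kp: "0 < k" using k2 by simp
  have e: "ee k j 1 * real k ^ (j - 1) = fact j" using ee_1[OF kp] j2 by simp
  have kpow: "0 < real k ^ (j - 1)" using kp by simp
  have C: "1 / ee k j 1 = real k ^ (j - 1) / fact j"
  proof -
    have "ee k j 1 = (ee k j 1 * real k ^ (j - 1)) / real k ^ (j - 1)" using kp by simp
    then have "ee k j 1 = fact j / real k ^ (j - 1)" unfolding e .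
    then show ?thesis by simp
  qed
  have fj: "fact j = real j * fact (j - 1)" using j2 fact_reduce[of j] by simp
  have "real j \<le> 4 ^ (j - 1)" using four_pow[of "j - 1"] j2 by simp
  then have "(fact j :: real) \<le> 4 ^ (j - 1) * fact (j - 1)" unfolding fj
    by (intro mult_right_mono) auto
  then have "real k ^ (j - 1) / (4 ^ (j - 1) * fact (j - 1)) \<le> real k ^ (j - 1) / fact j"
    by (intro divide_left_mono) auto
  then show ?thesis using C by simp
qed

theorem mainTheorem3:
  fixes k :: nat and nxt :: "vtx \<Rightarrow> vtx"
  assumes "geodesic_next (Gedge k) B {A} nxt"
  shows "(\<forall>j. 1 \<le> j \<and> j \<le> msq k + 1 \<longrightarrow>
            hit_time (gbrw_P (Gverts k) (Gedge k) B {A} nxt) (Gverts k) A (mainv k j)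
              \<ge> ennreal (real k ^ (j - 1) / (4 ^ (j - 1) * fact (j - 1))))
       \<and> hit_time (gbrw_P (Gverts k) (Gedge k) B {A} nxt) (Gverts k) A B
              \<ge> ennreal (real k ^ msq k / (4 ^ msq k * fact (msq k)))"
proof -
  have main: "ennreal (real k ^ (j - 1) / (4 ^ (j - 1) * fact (j - 1)))
      \<le> hit_time (PP k nxt) (Gverts k) A (mainv k j)"
    if j1: "1 \<le> j" and jm: "j \<le> msq k + 1" for j
  proof (cases "j = 1 \<or> k \<le> 1")
    case True
    have "ennreal (real k ^ (j - 1) / (4 ^ (j - 1) * fact (j - 1))) \<le> ennreal 1"
      using bound_le_1[OF True] by (rule ennreal_leI)
    also have "\<dots> \<le> hit_time (PP k nxt) (Gverts k) A (mainv k j)" by (rule trivial_case[OF j1])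
    finally show ?thesis .
  next
    case False
    then have j2: "2 \<le> j" and k2: "2 \<le> k" using j1 by auto
    have "ennreal (real k ^ (j - 1) / (4 ^ (j - 1) * fact (j - 1))) \<le> ennreal (1 / ee k j 1)"
      using bound_le_C[OF j2 k2] by (rule ennreal_leI)
    also have "\<dots> \<le> hit_time (PP k nxt) (Gverts k) A (mainv k j)"
      by (rule main_case[OF assms j2 jm k2])
    finally show ?thesis .
  qed
  have "ennreal (real k ^ (Suc (msq k) - 1) / (4 ^ (Suc (msq k) - 1) * fact (Suc (msq k) - 1)))
      \<le> hit_time (PP k nxt) (Gverts k) A (mainv k (Suc (msq k)))"
    by (rule main) auto
  then have "ennreal (real k ^ msq k / (4 ^ msq k * fact (msq k))) \<le> hit_time (PP k nxt) (Gverts k) A B"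
    by simp
  then show ?thesis using main by blast
qed

end
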